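(* Let $f$ be a real entire function of genus $1$ with only negative zeros and with $f(0)>0$. For $s>0$ the function $$h(z)=(\log f)(z)-(\log f)(z+s),\qquad z\in\mathbb C\setminus(-\infty,0],$$ is a Pick function. Its representing measure is supported on $(-\infty,0]$, and $\lim_{y\to\infty}h(iy)/(iy)=0$.
   Context: Here $\log f$ denotes the holomorphic logarithm of $f$ on the cut plane $\mathbb C\setminus(-\infty,0]$ (where $f$ has no zeros) that is real on $(0,\infty)$. A Pick function is a holomorphic function $p$ on the upper half-plane with $\Im p\geq0$ there; every such $p$ has a representation $p(z)=\alpha z+\beta+\int_{-\infty}^\infty\left(\frac{1}{t-z}-\frac{t}{t^2+1}\right)d\mu(t)$ with $\alpha\geq0$, $\beta\in\mathbb R$ and $\mu$ a positive measure with $\int d\mu(t)/(1+t^2)<\infty$; $\mu$ is called the representing measure. *)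

theory Defs
  imports "HOL-Complex_Analysis.Complex_Analysis" "HOL-Probability.Probability"
          "HOL-Computational_Algebra.Polynomial"
begin

definition weierstrass_factor :: "nat \<Rightarrow> complex \<Rightarrow> complex" where
  "weierstrass_factor p z = (1 - z) * exp (\<Sum>k=1..p. z ^ k / of_nat k)"

text \<open>The zeros are parametrised by their
  reciprocals w_n = 1/a_n; w_n = 0 gives a trivial factor (this allows finitely many zeros).\<close>
definition genus_le :: "(complex \<Rightarrow> complex) \<Rightarrow> nat \<Rightarrow> bool" where
  "genus_le f p \<longleftrightarrow>
     (\<exists>(m::nat) (g::complex poly) (w::nat \<Rightarrow> complex).
        degree g \<le> p \<and> summable (\<lambda>n. norm (w n) ^ (p + 1)) \<and>
        (\<forall>z. f z = z ^ m * exp (poly g z) * (\<Prod>n. weierstrass_factor p (z * w n))))"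

definition has_genus :: "(complex \<Rightarrow> complex) \<Rightarrow> nat \<Rightarrow> bool" where
  "has_genus f p \<longleftrightarrow> genus_le f p \<and> (\<forall>q<p. \<not> genus_le f q)"

definition cut_plane :: "complex set" where
  "cut_plane = UNIV - complex_of_real ` {..0}"

definition upper_half_plane :: "complex set" where
  "upper_half_plane = {z. Im z > 0}"

definition pick_function :: "(complex \<Rightarrow> complex) \<Rightarrow> bool" where
  "pick_function p \<longleftrightarrow> p holomorphic_on upper_half_plane \<and>
     (\<forall>z\<in>upper_half_plane. Im (p z) \<ge> 0)"

definition pick_representing_measure :: "(complex \<Rightarrow> complex) \<Rightarrow> real measure \<Rightarrow> bool" where
  "pick_representing_measure p \<mu> \<longleftrightarrow>
     sets \<mu> = sets borel \<and>
     (\<integral>\<^sup>+ t. ennreal (1 / (1 + t\<^sup>2)) \<partial>\<mu>) < \<infinity> \<and>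
     (\<exists>\<alpha> \<beta> :: real. \<alpha> \<ge> 0 \<and>
        (\<forall>z\<in>upper_half_plane.
           p z = of_real \<alpha> * z + of_real \<beta> +
                 (\<integral> t. (1 / (of_real t - z) - of_real (t / (t\<^sup>2 + 1))) \<partial>\<mu>)))"

end

theory Submission
  imports Defs
begin

lemma wf1: "weierstrass_factor 1 u = (1 - u) * exp u"
  by (simp add: weierstrass_factor_def)

lemma wf1': "weierstrass_factor (Suc 0) u = (1 - u) * exp u"
  by (simp add: weierstrass_factor_def)

lemma wf_lib: "weierstrass_factor p = Weierstrass_Factorization.weierstrass_factor p"
  by (rule ext) (simp add: weierstrass_factor_def Weierstrass_Factorization.weierstrass_factor_def)

lemma dist_bound:
  fixes t :: real and z :: complex
  assumes "t < 0" "norm z \<le> R" "\<delta> > 0" "\<delta> \<le> Im z \<or> 0 \<le> Re z"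
  shows "\<delta> * \<bar>t\<bar> \<le> (R + \<delta>) * norm (of_real t - z)"
proof -
  have R0: "R \<ge> 0" using assms(2) norm_ge_zero order_trans by blast
  have d1: "norm (of_real t - z) \<ge> \<bar>t\<bar> - R"
    using norm_triangle_ineq2[of "of_real t" z] assms(2) by simp
  show ?thesis
  proof (cases "0 \<le> Re z")
    case True
    have "norm (of_real t - z) \<ge> \<bar>Re (of_real t - z)\<bar>" by (rule abs_Re_le_cmod)
    hence "norm (of_real t - z) \<ge> \<bar>t\<bar>" using True assms(1) by simp
    thus ?thesis using R0 assms(3)
      by (smt (verit, best) mult_mono abs_ge_zero)
  next
    case False
    hence "\<delta> \<le> Im z" using assms(4) by auto
    have "norm (of_real t - z) \<ge> \<bar>Im (of_real t - z)\<bar>" by (rule abs_Im_le_cmod)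
    hence d2: "norm (of_real t - z) \<ge> \<delta>" using \<open>\<delta> \<le> Im z\<close> by simp
    show ?thesis
    proof (cases "\<bar>t\<bar> \<le> R + \<delta>")
      case True
      have "\<delta> * \<bar>t\<bar> \<le> \<delta> * (R + \<delta>)" using True assms(3) by (intro mult_left_mono) auto
      also have "\<dots> \<le> (R + \<delta>) * norm (of_real t - z)" using d2 R0 assms(3)
        by (metis mult.commute mult_left_mono add_nonneg_nonneg less_imp_le)
      finally show ?thesis .
    next
      case False
      have "(R + \<delta>) * norm (of_real t - z) \<ge> (R + \<delta>) * (\<bar>t\<bar> - R)"
        using d1 R0 assms(3) by (intro mult_left_mono) auto
      moreover have "(R + \<delta>) * (\<bar>t\<bar> - R) - \<delta> * \<bar>t\<bar> = R * (\<bar>t\<bar> - R - \<delta>)"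
        by (simp add: algebra_simps)
      moreover have "R * (\<bar>t\<bar> - R - \<delta>) \<ge> 0" using False R0 by simp
      ultimately show ?thesis by linarith
    qed
  qed
qed

lemma not_nonpos_shift:
  fixes t :: real
  assumes "t < 0" "Im z > 0 \<or> Re z > 0"
  shows "z - of_real t \<notin> \<real>\<^sub>\<le>\<^sub>0"
  using assms by (auto simp: complex_nonpos_Reals_iff)

lemma T_integral:
  fixes r s :: real and z :: complex
  assumes r: "r < 0" and z: "Im z > 0 \<or> Re z > 0" and s: "s > 0"
  shows "((\<lambda>t. 1 / (of_real t - z) - of_real r) has_integral
           (Ln (z - of_real (1/r)) - Ln (z - of_real (1/r) + of_real s) - of_real (s * r))) {1/r - s..1/r}"
proof -
  define F where "F t = Ln (z - of_real t) - of_real (r * t)" for t :: real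
  have "((\<lambda>t. 1 / (of_real t - z) - of_real r) has_integral (F (1/r) - F (1/r - s))) {1/r - s..1/r}"
  proof (rule fundamental_theorem_of_calculus)
    show "1/r - s \<le> 1/r" using s by simp
    fix t assume t: "t \<in> {1/r - s..1/r}"
    have "1/r < 0" using r by simp
    hence t0: "t < 0" using t by (simp only: atLeastAtMost_iff) linarith
    have nz: "z - of_real t \<notin> \<real>\<^sub>\<le>\<^sub>0" by (rule not_nonpos_shift[OF t0 z])
    hence nz0: "z - of_real t \<noteq> 0" by auto
    have "((\<lambda>w. Ln (z - w) - of_real r * w) has_field_derivative
            (inverse (z - of_real t) * (-1) - of_real r)) (at (of_real t))"
      by (rule derivative_eq_intros has_field_derivative_Ln[THEN DERIV_chain2] | use nz in simp)+
    hence "((\<lambda>x. Ln (z - of_real x) - of_real r * of_real x) has_vector_derivative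
            (inverse (z - of_real t) * (-1) - of_real r)) (at t within {1/r - s..1/r})"
      by (rule has_vector_derivative_real_field)
    moreover have "inverse (z - of_real t) * (-1) - of_real r = 1 / (of_real t - z) - of_real r"
      using nz0 by (simp add: field_simps)
    ultimately show "(F has_vector_derivative (1 / (of_real t - z) - of_real r)) (at t within {1/r - s..1/r})"
      unfolding F_def by simp
  qed
  moreover have "F (1/r) - F (1/r - s) = Ln (z - of_real (1/r)) - Ln (z - of_real (1/r) + of_real s) - of_real (s * r)"
    using r unfolding F_def by (simp add: algebra_simps)
  ultimately show ?thesis by simp
qed

lemma E_conv_c:
  fixes w :: "nat \<Rightarrow> complex"
  assumes ws: "summable (\<lambda>n. norm (w n) ^ 2)"
  shows "convergent_prod (\<lambda>n. weierstrass_factor 1 (z * w n))"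
proof -
  have "(\<lambda>n. norm (w n) ^ 2) \<longlonglongrightarrow> 0" by (rule summable_LIMSEQ_zero[OF ws])
  hence "(\<lambda>n. sqrt (norm (w n) ^ 2)) \<longlonglongrightarrow> sqrt 0" by (intro tendsto_real_sqrt)
  hence "(\<lambda>n. norm (w n)) \<longlonglongrightarrow> 0" by simp
  hence "(\<lambda>n. norm z * norm (w n)) \<longlonglongrightarrow> norm z * 0" by (intro tendsto_intros)
  hence "(\<lambda>n. norm (z * w n)) \<longlonglongrightarrow> 0" by (simp add: norm_mult)
  hence ev: "eventually (\<lambda>n. norm (z * w n) < 1/2) sequentially"
    by (rule order_tendstoD) simp
  have "summable (\<lambda>n. norm (weierstrass_factor 1 (z * w n) - 1))"
  proof (rule summable_comparison_test_ev)
    show "eventually (\<lambda>n. norm (norm (weierstrass_factor 1 (z * w n) - 1)) \<le> 3 * norm z ^ 2 * norm (w n) ^ 2) sequentially"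
      using ev
    proof eventually_elim
      case (elim n)
      have "norm (Weierstrass_Factorization.weierstrass_factor 1 (z * w n) - 1) \<le> 3 * norm (z * w n) ^ Suc 1"
        by (rule weierstrass_factor_bound) (use elim in simp)
      thus ?case by (simp add: wf_lib norm_mult power_mult_distrib power2_eq_square mult_ac)
    qed
    show "summable (\<lambda>n. 3 * norm z ^ 2 * norm (w n) ^ 2)" by (rule summable_mult[OF ws])
  qed
  hence "abs_convergent_prod (\<lambda>n. weierstrass_factor 1 (z * w n))"
    by (simp add: abs_convergent_prod_conv_summable)
  thus ?thesis by (rule abs_convergent_prod_imp_convergent_prod)
qed

locale pk =
  fixes r :: "nat \<Rightarrow> real" and s :: real
  assumes r_nonpos: "\<And>n. r n \<le> 0" and r_sum: "summable (\<lambda>n. r n ^ 2)" and s_pos: "s > 0"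
begin

definition T :: "nat \<Rightarrow> complex \<Rightarrow> complex" where
  "T n z = (if r n = 0 then 0 else Ln (z - of_real (1/r n)) - Ln (z - of_real (1/r n) + of_real s) - of_real (s * r n))"

definition J :: "nat \<Rightarrow> real set" where
  "J n = (if r n = 0 then {} else {1/r n - s..1/r n})"

definition D :: "complex set" where
  "D = {z. Im z > 0} \<union> {z. Re z > 0}"

lemma T_has_integral:
  assumes "z \<in> D"
  shows "((\<lambda>t. 1 / (of_real t - z) - of_real (r n)) has_integral T n z) (J n)"
proof (cases "r n = 0")
  case True thus ?thesis by (simp add: T_def J_def)
next
  case False
  hence "r n < 0" using r_nonpos[of n] by simp
  have z': "Im z > 0 \<or> Re z > 0" using assms by (simp add: D_def)
  have "((\<lambda>t. 1 / (of_real t - z) - of_real (r n)) has_integral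
           (Ln (z - of_real (1/r n)) - Ln (z - of_real (1/r n) + of_real s) - of_real (s * r n))) {1/r n - s..1/r n}"
    by (rule T_integral[OF \<open>r n < 0\<close> z' s_pos])
  thus ?thesis using False unfolding T_def J_def by simp
qed

lemma J_neg: "t \<in> J n \<Longrightarrow> r n < 0 \<and> t \<le> 1 / r n \<and> 1/r n - s \<le> t"
  using r_nonpos[of n] by (auto simp: J_def split: if_splits)

lemma integrand_bound:
  assumes t: "t \<in> J n" and z: "norm z \<le> R" "\<delta> > 0" "\<delta> \<le> Im z \<or> 0 \<le> Re z"
  shows "norm (1 / (of_real t - z) - of_real (r n)) \<le> ((s + R) * (R + \<delta>) / \<delta>) * r n ^ 2"
proof -
  from J_neg[OF t] have rn: "r n < 0" and ta: "t \<le> 1 / r n" and tb: "1/r n - s \<le> t" by auto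
  define a where "a = 1 / r n"
  have a0: "a < 0" using rn by (simp add: a_def)
  have t0: "t < 0" using ta a0 a_def by linarith
  have ra: "r n * a = 1" using rn by (simp add: a_def)
  have R0: "R \<ge> 0" using z(1) norm_ge_zero order_trans by blast
  have db: "\<delta> * \<bar>t\<bar> \<le> (R + \<delta>) * norm (of_real t - z)" by (rule dist_bound[OF t0 z])
  have ne: "of_real t - z \<noteq> 0"
  proof
    assume "of_real t - z = 0"
    with db have "\<delta> * \<bar>t\<bar> \<le> 0" by simp
    with z(2) t0 show False using mult_pos_neg[of \<delta> t] by simp
  qed
  have "1 / (of_real t - z) - of_real (r n) = of_real (r n) * (of_real a - of_real t + z) / (of_real t - z)"
    using ne ra by (simp add: field_simps) (metis of_real_mult of_real_1 mult.commute)
  hence "norm (1 / (of_real t - z) - of_real (r n)) = \<bar>r n\<bar> * norm (of_real a - of_real t + z) / norm (of_real t - z)"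
    by (simp add: norm_mult norm_divide)
  also have "\<dots> \<le> \<bar>r n\<bar> * (s + R) / (\<delta> * \<bar>a\<bar> / (R + \<delta>))"
  proof (intro frac_le mult_left_mono)
    have "norm (of_real a - of_real t + z) \<le> norm (of_real (a - t) :: complex) + norm z"
      by (metis norm_triangle_ineq of_real_diff)
    also have "\<dots> = \<bar>a - t\<bar> + norm z" by (simp only: norm_of_real)
    also have "\<dots> \<le> s + R" using ta tb z(1) unfolding a_def by linarith
    finally show "norm (of_real a - of_real t + z) \<le> s + R" .
    show "0 < \<delta> * \<bar>a\<bar> / (R + \<delta>)" using a0 z(2) R0 by (intro divide_pos_pos mult_pos_pos) auto
    have "\<delta> * \<bar>a\<bar> \<le> \<delta> * \<bar>t\<bar>" using ta a0 t0 z(2) by (intro mult_left_mono) (auto simp: a_def)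
    hence "\<delta> * \<bar>a\<bar> \<le> (R + \<delta>) * norm (of_real t - z)" using db by linarith
    thus "\<delta> * \<bar>a\<bar> / (R + \<delta>) \<le> norm (of_real t - z)" using R0 z(2)
      by (simp add: divide_le_eq mult.commute)
  qed (use R0 z s_pos in auto)
  also have "\<dots> = ((s + R) * (R + \<delta>) / \<delta>) * (\<bar>r n\<bar> / \<bar>a\<bar>)"
    using z(2) a0 R0 by (simp add: field_simps)
  also have "\<bar>r n\<bar> / \<bar>a\<bar> = r n ^ 2" using rn by (simp add: a_def power2_eq_square abs_mult)
  finally show ?thesis .
qed

lemma T_bound:
  assumes "z \<in> D" "norm z \<le> R" "\<delta> > 0" "\<delta> \<le> Im z \<or> 0 \<le> Re z"
  shows "norm (T n z) \<le> (s * ((s + R) * (R + \<delta>) / \<delta>)) * r n ^ 2"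
proof (cases "r n = 0")
  case True thus ?thesis by (simp add: T_def)
next
  case False
  have R0: "R \<ge> 0" using assms(2) norm_ge_zero order_trans by blast
  have J: "J n = cbox (1/r n - s) (1/r n)" using False by (simp add: J_def)
  have "norm (T n z) \<le> (((s + R) * (R + \<delta>) / \<delta>) * r n ^ 2) * measure lborel (cbox (1/r n - s) (1/r n))"
  proof (rule has_integral_bound)
    show "0 \<le> (s + R) * (R + \<delta>) / \<delta> * (r n)\<^sup>2" using R0 s_pos assms(3) by simp
    show "((\<lambda>t. 1 / (of_real t - z) - of_real (r n)) has_integral T n z) (cbox (1/r n - s) (1/r n))"
      using T_has_integral[OF assms(1), of n] J by simp
    fix t assume "t \<in> cbox (1/r n - s) (1/r n)"
    hence "t \<in> J n" using J by simp
    thus "norm (1 / (of_real t - z) - of_real (r n)) \<le> (s + R) * (R + \<delta>) / \<delta> * (r n)\<^sup>2"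
      by (rule integrand_bound[OF _ assms(2-4)])
  qed
  also have "measure lborel (cbox (1/r n - s) (1/r n)) = s" using s_pos by simp
  finally show ?thesis by (simp add: mult_ac)
qed

lemma D_local:
  assumes "z0 \<in> D"
  obtains \<epsilon> \<delta> where "\<epsilon> > 0" "\<delta> > 0" "\<And>z. z \<in> ball z0 \<epsilon> \<Longrightarrow> z \<in> D \<and> (\<delta> \<le> Im z \<or> 0 \<le> Re z)"
proof (cases "Im z0 > 0")
  case True
  show ?thesis
  proof (rule that[of "Im z0 / 2" "Im z0 / 2"])
    fix z assume "z \<in> ball z0 (Im z0 / 2)"
    hence "norm (z0 - z) < Im z0 / 2" by (simp add: dist_norm)
    moreover have "\<bar>Im (z0 - z)\<bar> \<le> norm (z0 - z)" by (rule abs_Im_le_cmod)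
    ultimately have "Im z > Im z0 / 2" by simp
    thus "z \<in> D \<and> (Im z0 / 2 \<le> Im z \<or> 0 \<le> Re z)" using True by (simp add: D_def)
  qed (use True in auto)
next
  case False
  hence Re0: "Re z0 > 0" using assms by (simp add: D_def)
  show ?thesis
  proof (rule that[of "Re z0 / 2" 1])
    fix z assume "z \<in> ball z0 (Re z0 / 2)"
    hence "norm (z0 - z) < Re z0 / 2" by (simp add: dist_norm)
    moreover have "\<bar>Re (z0 - z)\<bar> \<le> norm (z0 - z)" by (rule abs_Re_le_cmod)
    ultimately have "Re z > Re z0 / 2" by simp
    thus "z \<in> D \<and> (1 \<le> Im z \<or> 0 \<le> Re z)" using Re0 by (simp add: D_def)
  qed (use Re0 in auto)
qed

lemma T_summable:
  assumes "z \<in> D"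
  shows "summable (\<lambda>n. norm (T n z))"
proof -
  obtain \<epsilon> \<delta> where e: "\<epsilon> > 0" "\<delta> > 0" "\<And>w. w \<in> ball z \<epsilon> \<Longrightarrow> w \<in> D \<and> (\<delta> \<le> Im w \<or> 0 \<le> Re w)"
    using D_local[OF assms] by blast
  have "z \<in> ball z \<epsilon>" using e by simp
  hence zz: "\<delta> \<le> Im z \<or> 0 \<le> Re z" using e by blast
  show ?thesis
    by (rule summable_comparison_test'[OF summable_mult[OF r_sum, of "s * ((s + norm z) * (norm z + \<delta>) / \<delta>)"]])
       (use T_bound[OF assms order_refl e(2) zz] in auto)
qed

lemma T_cont: "continuous_on D (T n)"
proof (cases "r n = 0")
  case True thus ?thesis by (simp add: T_def)
next
  case False
  hence rn: "r n < 0" using r_nonpos[of n] by simp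
  hence a0: "1 / r n < 0" by simp
  have "continuous_on D (\<lambda>z. Ln (z - of_real (1/r n)) - Ln (z - of_real (1/r n) + of_real s) - of_real (s * r n))"
  proof (intro continuous_intros)
    fix z assume "z \<in> D"
    hence z: "Im z > 0 \<or> Re z > 0" by (simp add: D_def)
    show "z - of_real (1/r n) \<notin> \<real>\<^sub>\<le>\<^sub>0" by (rule not_nonpos_shift[OF a0 z])
    have "1/r n - s < 0" using a0 s_pos by linarith
    from not_nonpos_shift[OF this z]
    show "z - of_real (1/r n) + of_real s \<notin> \<real>\<^sub>\<le>\<^sub>0" by (simp add: algebra_simps)
  qed
  thus ?thesis using False unfolding T_def by simp
qed

lemma open_D: "open D"
  unfolding D_def by (intro open_Un open_halfspace_Im_gt open_halfspace_Re_gt)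

lemma S_cont: "continuous_on D (\<lambda>z. \<Sum>n. T n z)"
proof -
  have "isCont (\<lambda>z. \<Sum>n. T n z) z0" if z0: "z0 \<in> D" for z0
  proof -
    obtain \<epsilon> \<delta> where e: "\<epsilon> > 0" "\<delta> > 0" "\<And>w. w \<in> ball z0 \<epsilon> \<Longrightarrow> w \<in> D \<and> (\<delta> \<le> Im w \<or> 0 \<le> Re w)"
      using D_local[OF z0] by blast
    define R where "R = norm z0 + \<epsilon>"
    have "uniform_limit (ball z0 \<epsilon>) (\<lambda>n z. \<Sum>i<n. T i z) (\<lambda>z. \<Sum>i. T i z) sequentially"
    proof (rule Weierstrass_m_test)
      show "summable (\<lambda>n. (s * ((s + R) * (R + \<delta>) / \<delta>)) * r n ^ 2)"
        by (rule summable_mult[OF r_sum])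
      fix n z assume z: "z \<in> ball z0 \<epsilon>"
      have "norm z \<le> R" using z norm_triangle_ineq2[of z z0] unfolding R_def by (simp add: dist_norm norm_minus_commute)
      thus "norm (T n z) \<le> (s * ((s + R) * (R + \<delta>) / \<delta>)) * r n ^ 2"
        using e(3)[OF z] T_bound[of z R \<delta> n] e(2) by blast
    qed
    moreover have "continuous_on (ball z0 \<epsilon>) (\<lambda>z. \<Sum>i<n. T i z)" for n
      by (intro continuous_on_sum continuous_on_subset[OF T_cont]) (use e(3) in blast)
    ultimately have "continuous_on (ball z0 \<epsilon>) (\<lambda>z. \<Sum>i. T i z)"
      by (intro uniform_limit_theorem[of _ "\<lambda>n z. \<Sum>i<n. T i z"]) auto
    thus ?thesis using e(1) by (intro continuous_on_interior) auto
  qed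
  thus ?thesis using open_D by (simp add: continuous_on_eq_continuous_at)
qed

lemma r_tendsto: "r \<longlonglongrightarrow> 0"
proof -
  have "(\<lambda>n. sqrt (r n ^ 2)) \<longlonglongrightarrow> sqrt 0"
    by (intro tendsto_real_sqrt summable_LIMSEQ_zero[OF r_sum])
  hence "(\<lambda>n. \<bar>r n\<bar>) \<longlonglongrightarrow> 0" by simp
  thus ?thesis by (simp add: tendsto_rabs_zero_iff)
qed

lemma E_conv: "convergent_prod (\<lambda>n. weierstrass_factor 1 (z * of_real (r n)))"
proof -
  have "(\<lambda>n. norm (z * of_real (r n))) \<longlonglongrightarrow> norm (z * of_real 0)"
    by (intro tendsto_intros r_tendsto)
  hence ev: "eventually (\<lambda>n. norm (z * of_real (r n)) < 1/2) sequentially"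
    by (rule order_tendstoD) simp
  have "summable (\<lambda>n. norm (weierstrass_factor 1 (z * of_real (r n)) - 1))"
  proof (rule summable_comparison_test_ev)
    show "eventually (\<lambda>n. norm (norm (weierstrass_factor 1 (z * of_real (r n)) - 1)) \<le> 3 * norm z ^ 2 * r n ^ 2) sequentially"
      using ev
    proof eventually_elim
      case (elim n)
      have "norm (Weierstrass_Factorization.weierstrass_factor 1 (z * of_real (r n)) - 1) \<le> 3 * norm (z * of_real (r n)) ^ Suc 1"
        by (rule weierstrass_factor_bound) (use elim in simp)
      thus ?case by (simp add: wf_lib norm_mult power_mult_distrib power2_eq_square mult_ac)
    qed
    show "summable (\<lambda>n. 3 * norm z ^ 2 * r n ^ 2)" by (rule summable_mult[OF r_sum])
  qed
  hence "abs_convergent_prod (\<lambda>n. weierstrass_factor 1 (z * of_real (r n)))"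
    by (simp add: abs_convergent_prod_conv_summable)
  thus ?thesis by (rule abs_convergent_prod_imp_convergent_prod)
qed

lemma factor_shift:
  assumes "z \<in> D"
  shows "weierstrass_factor 1 (z * of_real (r n)) = weierstrass_factor 1 ((z + of_real s) * of_real (r n)) * exp (T n z)"
proof (cases "r n = 0")
  case True thus ?thesis by (simp add: T_def wf1)
next
  case False
  hence rn: "r n < 0" using r_nonpos[of n] by simp
  hence a0: "1 / r n < 0" by simp
  have z: "Im z > 0 \<or> Re z > 0" using assms by (simp add: D_def)
  define u where "u = z - of_real (1/r n)"
  define v where "v = z - of_real (1/r n) + of_real s"
  have u: "u \<notin> \<real>\<^sub>\<le>\<^sub>0" unfolding u_def by (rule not_nonpos_shift[OF a0 z])
  have "1/r n - s < 0" using a0 s_pos by linarith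
  from not_nonpos_shift[OF this z] have v: "v \<notin> \<real>\<^sub>\<le>\<^sub>0" unfolding v_def by (simp add: algebra_simps)
  have u0: "u \<noteq> 0" and v0: "v \<noteq> 0" using u v by auto
  have Tz: "T n z = Ln u - Ln v - of_real (s * r n)" using False by (simp add: T_def u_def v_def)
  have eT: "exp (T n z) = u / v * exp (- of_real (s * r n))"
    unfolding Tz using u0 v0 by (simp add: exp_diff exp_minus divide_inverse)
  have ra: "of_real (r n) * of_real (1 / r n) = (1::complex)" using False by (simp flip: of_real_mult)
  have key: "(1 - (z + of_real s) * of_real (r n)) * u = (1 - z * of_real (r n)) * v"
    using False unfolding u_def v_def by (simp add: algebra_simps ra)
  have "weierstrass_factor 1 ((z + of_real s) * of_real (r n)) * exp (T n z)
        = (1 - (z + of_real s) * of_real (r n)) * u / v * (exp ((z + of_real s) * of_real (r n)) * exp (- of_real (s * r n)))"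
    by (simp add: wf1 wf1' eT)
  also have "exp ((z + of_real s) * of_real (r n)) * exp (- of_real (s * r n)) = exp (z * of_real (r n))"
    by (simp flip: exp_add add: algebra_simps)
  also have "(1 - (z + of_real s) * of_real (r n)) * u / v = 1 - z * of_real (r n)"
    using key v0 by (metis nonzero_mult_div_cancel_right)
  finally show ?thesis by (simp add: wf1 wf1')
qed

lemma P_shift:
  assumes "z \<in> D"
  shows "(\<Prod>n. weierstrass_factor 1 (z * of_real (r n))) =
         (\<Prod>n. weierstrass_factor 1 ((z + of_real s) * of_real (r n))) * exp (\<Sum>n. T n z)"
proof -
  have "summable (\<lambda>n. T n z)" using T_summable[OF assms] by (rule summable_norm_cancel)
  hence "(\<lambda>n. T n z) sums (\<Sum>n. T n z)" by (rule summable_sums)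
  hence e: "(\<lambda>n. exp (T n z)) has_prod exp (\<Sum>n. T n z)"
    unfolding has_prod_def by (intro disjI1 sums_imp_has_prod_exp)
  have p: "(\<lambda>n. weierstrass_factor 1 ((z + of_real s) * of_real (r n))) has_prod
             (\<Prod>n. weierstrass_factor 1 ((z + of_real s) * of_real (r n)))"
    using E_conv by (simp add: convergent_prod_has_prod_iff[symmetric])
  have "(\<lambda>n. weierstrass_factor 1 ((z + of_real s) * of_real (r n)) * exp (T n z)) has_prod
          ((\<Prod>n. weierstrass_factor 1 ((z + of_real s) * of_real (r n))) * exp (\<Sum>n. T n z))"
    by (rule has_prod_mult[OF p e])
  moreover have eqf: "(\<lambda>n. weierstrass_factor 1 (z * of_real (r n))) =
     (\<lambda>n. weierstrass_factor 1 ((z + of_real s) * of_real (r n)) * exp (T n z))"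
    by (rule ext) (rule factor_shift[OF assms])
  ultimately have "(\<lambda>n. weierstrass_factor 1 (z * of_real (r n))) has_prod
          ((\<Prod>n. weierstrass_factor 1 ((z + of_real s) * of_real (r n))) * exp (\<Sum>n. T n z))"
    by simp
  thus ?thesis by (rule has_prod_unique[symmetric])
qed

definition rho :: "real \<Rightarrow> real" where
  "rho t = (\<Sum>n. indicator (J n) t)"

definition mu :: "real measure" where
  "mu = density lborel (\<lambda>t. ennreal (rho t))"

lemma J_sets [measurable]: "J n \<in> sets borel"
  by (simp add: J_def)

lemma J_measure: "measure lborel (J n) \<le> s"
  using s_pos by (simp add: J_def)

lemma J_emeasure: "emeasure lborel (J n) < \<infinity>"
  by (simp add: J_def emeasure_lborel_Icc_eq)

lemma ind_ev0: "eventually (\<lambda>n. indicator (J n) t = (0::real)) sequentially"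
proof -
  have "(\<lambda>n. \<bar>r n\<bar>) \<longlonglongrightarrow> \<bar>0\<bar>" by (intro tendsto_intros r_tendsto)
  hence "eventually (\<lambda>n. \<bar>r n\<bar> < 1 / (\<bar>t\<bar> + 1)) sequentially"
    by (rule order_tendstoD) simp
  thus ?thesis
  proof eventually_elim
    case (elim n)
    show ?case
    proof (rule ccontr)
      assume "indicator (J n) t \<noteq> (0::real)"
      hence "t \<in> J n" by (auto simp: indicator_def split: if_splits)
      from J_neg[OF this] have rn: "r n < 0" and ta: "t \<le> 1 / r n" by auto
      have "1 / r n < 0" using rn by simp
      hence "\<bar>t\<bar> \<ge> -(1 / r n)" using ta by linarith
      also have "-(1 / r n) = 1 / \<bar>r n\<bar>" using rn by simp
      finally have "\<bar>t\<bar> * \<bar>r n\<bar> \<ge> 1" using rn by (simp add: field_simps)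
      moreover have "\<bar>r n\<bar> * (\<bar>t\<bar> + 1) < 1" using elim by (simp add: field_simps)
      moreover have "\<bar>r n\<bar> > 0" using rn by simp
      ultimately show False by (simp add: algebra_simps)
    qed
  qed
qed

lemma rho_summable: "summable (\<lambda>n. indicator (J n) t :: real)"
  by (rule summable_comparison_test_ev[of _ "\<lambda>_. 0"]) (use ind_ev0[of t] in \<open>auto elim: eventually_mono\<close>)

lemma rho_nonneg: "rho t \<ge> 0"
  unfolding rho_def by (intro suminf_nonneg rho_summable) auto

lemma rho_meas [measurable]: "rho \<in> borel_measurable borel"
  unfolding rho_def by (intro borel_measurable_suminf) measurable

lemma sets_mu [simp]: "sets mu = sets borel"
  by (simp add: mu_def)

lemma GL:
  fixes f :: "real \<Rightarrow> 'b::{banach, second_countable_topology}"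
  assumes fm [measurable]: "f \<in> borel_measurable borel" and C0: "C \<ge> 0"
    and C: "\<And>n t. t \<in> J n \<Longrightarrow> norm (f t) \<le> C * r n ^ 2"
  shows "set_integrable lborel (J n) f" "integrable mu f"
    "(\<lambda>n. set_lebesgue_integral lborel (J n) f) sums (\<integral>t. f t \<partial>mu)"
proof -
  define F where "F n t = indicator (J n) t *\<^sub>R f t" for n t
  have Fm [measurable]: "F n \<in> borel_measurable lborel" for n unfolding F_def by measurable
  have bnd: "norm (F n t) \<le> C * r n ^ 2 * indicator (J n) t" for n t
    using C[of t n] by (auto simp: F_def indicator_def)
  have ii: "integrable lborel (\<lambda>t. C * r n ^ 2 * indicator (J n) t :: real)" for n
    by (intro integrable_mult_right integrable_real_indicator) (auto simp: J_def emeasure_lborel_Icc_eq)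
  have Fint: "integrable lborel (F n)" for n
    by (rule Bochner_Integration.integrable_bound[OF ii[of n]]) (use bnd C0 in \<open>auto intro!: AE_I2 order_trans[OF bnd]\<close>)
  thus "set_integrable lborel (J n) f" unfolding set_integrable_def F_def .
  have AEs: "AE t in lborel. summable (\<lambda>n. norm (F n t))"
    by (intro AE_I2) (simp add: F_def summable_mult2[OF rho_summable])
  have ints: "summable (\<lambda>n. \<integral>t. norm (F n t) \<partial>lborel)"
  proof (rule summable_comparison_test')
    show "summable (\<lambda>n. C * s * r n ^ 2)" by (rule summable_mult[OF r_sum])
    fix n :: nat
    have "(\<integral>t. norm (F n t) \<partial>lborel) \<le> (\<integral>t. C * r n ^ 2 * indicator (J n) t \<partial>lborel)"
      by (rule integral_mono'[OF ii]) (use bnd C0 in auto)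
    also have "\<dots> = C * r n ^ 2 * measure lborel (J n)" by simp
    also have "\<dots> \<le> C * r n ^ 2 * s" using C0 J_measure by (intro mult_left_mono) auto
    finally show "norm (\<integral>t. norm (F n t) \<partial>lborel) \<le> C * s * r n ^ 2"
      by (simp add: integral_nonneg_AE mult_ac)
  qed
  have sumF: "(\<Sum>n. F n t) = rho t *\<^sub>R f t" for t
    unfolding F_def rho_def by (rule suminf_scaleR_left[OF rho_summable, symmetric])
  have "integrable lborel (\<lambda>t. \<Sum>n. F n t)" by (rule integrable_suminf[OF Fint AEs ints])
  hence i2: "integrable lborel (\<lambda>t. rho t *\<^sub>R f t)" by (simp add: sumF)
  show "integrable mu f" unfolding mu_def
    by (subst integrable_density) (use i2 rho_nonneg in auto)
  have "(\<lambda>n. integral\<^sup>L lborel (F n)) sums (\<integral>t. (\<Sum>n. F n t) \<partial>lborel)"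
    by (rule sums_integral[OF Fint AEs ints])
  also have "(\<integral>t. (\<Sum>n. F n t) \<partial>lborel) = (\<integral>t. f t \<partial>mu)"
    unfolding mu_def by (subst integral_density) (use rho_nonneg in \<open>auto simp: sumF\<close>)
  finally show "(\<lambda>n. set_lebesgue_integral lborel (J n) f) sums (\<integral>t. f t \<partial>mu)"
    by (simp add: F_def set_lebesgue_integral_def)
qed

definition phi :: "complex \<Rightarrow> real \<Rightarrow> complex" where
  "phi z t = 1 / (of_real t - z) - of_real (t / (t\<^sup>2 + 1))"

definition c :: "nat \<Rightarrow> real" where
  "c n = integral (J n) (\<lambda>t. t / (t\<^sup>2 + 1) - r n)"

lemma sq1 [simp]: "(t::real)\<^sup>2 + 1 \<noteq> 0"
  using zero_le_power2[of t] by linarith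

lemma sq1p [simp]: "(t::real)\<^sup>2 + 1 > 0"
  using zero_le_power2[of t] by linarith

lemma phi_meas [measurable]: "phi z \<in> borel_measurable borel"
  unfolding phi_def by measurable

lemma real_part_bound:
  assumes "t \<in> J n"
  shows "\<bar>t / (t\<^sup>2 + 1) - r n\<bar> \<le> (s + 1) * r n ^ 2"
proof -
  from J_neg[OF assms] have rn: "r n < 0" and ta: "t \<le> 1 / r n" and tb: "1/r n - s \<le> t" by auto
  define a where "a = 1 / r n"
  have a0: "a < 0" using rn by (simp add: a_def)
  have ta': "t \<le> a" "a - s \<le> t" using ta tb by (auto simp: a_def)
  have rn': "r n = 1 / a" using rn by (simp add: a_def)
  have t0: "t < 0" using ta' a0 by linarith
  have tp: "t\<^sup>2 + 1 > 0" by simp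
  have "t / (t\<^sup>2 + 1) - r n = (t * (a - t) - 1) / (a * (t\<^sup>2 + 1))"
    using a0 tp unfolding rn' by (simp add: field_simps power2_eq_square)
  hence "\<bar>t / (t\<^sup>2 + 1) - r n\<bar> = \<bar>t * (a - t) - 1\<bar> / (\<bar>a\<bar> * (t\<^sup>2 + 1))"
    using tp by (simp add: abs_mult)
  also have "\<dots> \<le> (s + 1) / a\<^sup>2"
  proof -
    have n1: "\<bar>t * (a - t) - 1\<bar> \<le> \<bar>t\<bar> * s + 1"
    proof -
      have "\<bar>a - t\<bar> \<le> s" using ta' by auto
      hence "\<bar>t * (a - t)\<bar> \<le> \<bar>t\<bar> * s" unfolding abs_mult by (rule mult_left_mono) simp
      thus ?thesis by linarith
    qed
    have ts: "0 \<le> \<bar>t\<bar> * s" using s_pos by simp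
    have "(\<bar>t\<bar> * s + 1) * \<bar>a\<bar> \<le> (\<bar>t\<bar> * s + 1) * \<bar>t\<bar>"
      by (rule mult_left_mono) (use ta' a0 t0 ts in linarith)+
    also have "\<dots> = s * t\<^sup>2 + \<bar>t\<bar>" by (simp add: algebra_simps power2_eq_square)
    also have "\<dots> \<le> (s + 1) * (t\<^sup>2 + 1)"
    proof -
      have "0 \<le> (\<bar>t\<bar> - 1)\<^sup>2" by simp
      hence "2 * \<bar>t\<bar> \<le> \<bar>t\<bar>\<^sup>2 + 1" by (simp add: power2_eq_square algebra_simps)
      hence "\<bar>t\<bar> \<le> t\<^sup>2 + 1" by simp
      thus ?thesis using s_pos by (simp add: algebra_simps)
    qed
    finally have key: "(\<bar>t\<bar> * s + 1) * \<bar>a\<bar> \<le> (s + 1) * (t\<^sup>2 + 1)" .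
    have "\<bar>t * (a - t) - 1\<bar> / (\<bar>a\<bar> * (t\<^sup>2 + 1)) \<le> (\<bar>t\<bar> * s + 1) / (\<bar>a\<bar> * (t\<^sup>2 + 1))"
      by (rule divide_right_mono[OF n1]) simp
    also have "\<dots> \<le> (s + 1) / a\<^sup>2"
      using key a0 tp by (simp add: divide_simps power2_eq_square abs_mult_self_eq mult_ac)
    finally show ?thesis .
  qed
  also have "\<dots> = (s + 1) * r n ^ 2" by (simp add: rn' power2_eq_square divide_simps)
  finally show ?thesis .
qed

lemma phi_bound:
  assumes z: "Im z > 0" and t: "t \<in> J n"
  shows "norm (phi z t) \<le> ((s + norm z) * (norm z + Im z) / Im z + (s + 1)) * r n ^ 2"
proof -
  have "phi z t = (1 / (of_real t - z) - of_real (r n)) - of_real (t / (t\<^sup>2 + 1) - r n)"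
    by (simp add: phi_def)
  hence "norm (phi z t) \<le> norm (1 / (of_real t - z) - of_real (r n)) + norm (of_real (t / (t\<^sup>2 + 1) - r n) :: complex)"
    by (metis norm_triangle_ineq4)
  also have "\<dots> \<le> ((s + norm z) * (norm z + Im z) / Im z) * r n ^ 2 + (s + 1) * r n ^ 2"
  proof (rule add_mono)
    show "norm (1 / (of_real t - z) - of_real (r n)) \<le> ((s + norm z) * (norm z + Im z) / Im z) * r n ^ 2"
      by (rule integrand_bound[OF t order_refl z]) simp
    show "norm (of_real (t / (t\<^sup>2 + 1) - r n) :: complex) \<le> (s + 1) * r n ^ 2"
      unfolding norm_of_real by (rule real_part_bound[OF t])
  qed
  finally show ?thesis by (simp add: algebra_simps)
qed

lemma phi_GL:
  assumes "Im z > 0"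
  shows "set_integrable lborel (J n) (phi z)" "integrable mu (phi z)"
    "(\<lambda>n. set_lebesgue_integral lborel (J n) (phi z)) sums (\<integral>t. phi z t \<partial>mu)"
  using GL[OF phi_meas _ phi_bound[OF assms]] assms s_pos by (auto simp: add_pos_nonneg)

lemma c_has_integral: "((\<lambda>t. t / (t\<^sup>2 + 1) - r n) has_integral c n) (J n)"
proof (cases "r n = 0")
  case True thus ?thesis by (simp add: J_def c_def)
next
  case False
  have "(\<lambda>t. t / (t\<^sup>2 + 1) - r n) integrable_on {1/r n - s..1/r n}"
    by (intro integrable_continuous_interval continuous_intros) auto
  thus ?thesis using False unfolding c_def J_def by (simp add: has_integral_integral)
qed

lemma T_decomp:
  assumes z: "Im z > 0"
  shows "T n z = set_lebesgue_integral lborel (J n) (phi z) + of_real (c n)"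
proof -
  have zD: "z \<in> D" using z by (simp add: D_def)
  have si: "set_integrable lborel (J n) (phi z)" by (rule phi_GL(1)[OF z])
  have h1: "(phi z has_integral set_lebesgue_integral lborel (J n) (phi z)) (J n)"
    using set_borel_integral_eq_integral[OF si] by (simp add: has_integral_integral)
  have h2: "((\<lambda>t. complex_of_real (t / (t\<^sup>2 + 1) - r n)) has_integral of_real (c n)) (J n)"
    using has_integral_linear[OF c_has_integral[of n] bounded_linear_of_real] unfolding o_def .
  have "((\<lambda>t. phi z t + complex_of_real (t / (t\<^sup>2 + 1) - r n)) has_integral
          (set_lebesgue_integral lborel (J n) (phi z) + of_real (c n))) (J n)"
    by (rule has_integral_add[OF h1 h2])
  moreover have "(\<lambda>t. phi z t + complex_of_real (t / (t\<^sup>2 + 1) - r n)) = (\<lambda>t. 1 / (of_real t - z) - of_real (r n))"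
    by (rule ext) (simp add: phi_def)
  ultimately have "((\<lambda>t. 1 / (of_real t - z) - of_real (r n)) has_integral
          (set_lebesgue_integral lborel (J n) (phi z) + of_real (c n))) (J n)" by simp
  with T_has_integral[OF zD, of n] show ?thesis by (rule has_integral_unique)
qed

lemma S_repr:
  assumes z: "Im z > 0"
  shows "summable c" "(\<Sum>n. T n z) = (\<integral>t. phi z t \<partial>mu) + of_real (\<Sum>n. c n)"
proof -
  have zD: "z \<in> D" using z by (simp add: D_def)
  have sT: "(\<lambda>n. T n z) sums (\<Sum>n. T n z)"
    by (rule summable_sums[OF summable_norm_cancel[OF T_summable[OF zD]]])
  have "(\<lambda>n. T n z - set_lebesgue_integral lborel (J n) (phi z)) sums ((\<Sum>n. T n z) - (\<integral>t. phi z t \<partial>mu))"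
    by (rule sums_diff[OF sT phi_GL(3)[OF z]])
  hence sc: "(\<lambda>n. complex_of_real (c n)) sums ((\<Sum>n. T n z) - (\<integral>t. phi z t \<partial>mu))"
    by (simp add: T_decomp[OF z])
  from sums_Re[OF sc] have c1: "c sums Re ((\<Sum>n. T n z) - (\<integral>t. phi z t \<partial>mu))" by simp
  from sums_Im[OF sc] have "(\<lambda>n. 0) sums Im ((\<Sum>n. T n z) - (\<integral>t. phi z t \<partial>mu))" by simp
  hence im0: "Im ((\<Sum>n. T n z) - (\<integral>t. phi z t \<partial>mu)) = 0" using sums_unique sums_zero by fastforce
  show "summable c" using c1 by (rule sums_summable)
  have "(\<Sum>n. c n) = Re ((\<Sum>n. T n z) - (\<integral>t. phi z t \<partial>mu))" using c1 by (rule sums_unique[symmetric])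
  hence "of_real (\<Sum>n. c n) = (\<Sum>n. T n z) - (\<integral>t. phi z t \<partial>mu)"
    using im0 by (simp add: complex_eq_iff)
  thus "(\<Sum>n. T n z) = (\<integral>t. phi z t \<partial>mu) + of_real (\<Sum>n. c n)" by simp
qed

lemma J_subset: "t \<in> J n \<Longrightarrow> t < 0"
proof -
  assume "t \<in> J n"
  from J_neg[OF this] have "r n < 0" "t \<le> 1 / r n" by auto
  moreover from this have "1 / r n < 0" by simp
  ultimately show "t < 0" by linarith
qed

lemma rho_pos_zero: "t > 0 \<Longrightarrow> rho t = 0"
proof -
  assume "t > 0"
  hence "indicator (J n) t = (0::real)" for n using J_subset[of t n] by (auto simp: indicator_def)
  thus ?thesis by (simp add: rho_def)
qed

lemma mu_zero: "emeasure mu {0<..} = 0"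
proof -
  have eq: "(\<lambda>t. ennreal (rho t) * indicator {0<..} t) = (\<lambda>t. 0)"
    by (auto simp: fun_eq_iff indicator_def rho_pos_zero)
  show ?thesis unfolding mu_def by (subst emeasure_density) (auto simp: eq)
qed

lemma w_GL: "integrable mu (\<lambda>t. 1 / (1 + t\<^sup>2))"
proof (rule GL(2))
  show "(\<lambda>t::real. 1 / (1 + t\<^sup>2)) \<in> borel_measurable borel" by measurable
  fix n t assume t: "t \<in> J n"
  from J_neg[OF t] have rn: "r n < 0" and ta: "t \<le> 1 / r n" by auto
  have a0: "1 / r n < 0" using rn by simp
  have "(-(1 / r n))\<^sup>2 \<le> (-t)\<^sup>2" by (rule power_mono) (use ta a0 in linarith)+
  hence "(1 / r n)\<^sup>2 \<le> t\<^sup>2" by simp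
  hence "1 / r n ^ 2 \<le> 1 + t\<^sup>2" by (simp add: power_divide)
  moreover have "0 < (1 + t\<^sup>2) * (1 / r n ^ 2)" using rn by (intro mult_pos_pos) (auto simp: add_pos_nonneg)
  ultimately have "1 / (1 + t\<^sup>2) \<le> 1 / (1 / r n ^ 2)" by (intro divide_left_mono) auto
  thus "norm (1 / (1 + t\<^sup>2)) \<le> 1 * r n ^ 2" by (simp add: add_pos_nonneg)
qed simp

lemma mu_finite: "(\<integral>\<^sup>+ t. ennreal (1 / (1 + t\<^sup>2)) \<partial>mu) < \<infinity>"
proof -
  have "(\<integral>\<^sup>+ t. ennreal (norm (1 / (1 + t\<^sup>2))) \<partial>mu) < \<infinity>"
    using w_GL by (simp add: integrable_iff_bounded)
  moreover have "(\<lambda>t. ennreal (norm (1 / (1 + t\<^sup>2)))) = (\<lambda>t. ennreal (1 / (1 + t\<^sup>2)))"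
    by (rule ext) (simp add: add_pos_nonneg)
  ultimately show ?thesis by simp
qed

lemma Im_phi_nonneg:
  assumes "Im z > 0" shows "Im (phi z t) \<ge> 0"
proof -
  have "Im (phi z t) = Im (1 / (of_real t - z))" by (simp add: phi_def)
  also have "\<dots> = Im z / (norm (of_real t - z))\<^sup>2"
    by (simp add: Im_divide cmod_power2)
  finally show ?thesis using assms by simp
qed

lemma Im_int_nonneg:
  assumes "Im z > 0" shows "Im (\<integral>t. phi z t \<partial>mu) \<ge> 0"
proof -
  have "Im (\<integral>t. phi z t \<partial>mu) = (\<integral>t. Im (phi z t) \<partial>mu)"
    by (rule integral_Im[OF phi_GL(2)[OF assms], symmetric])
  also have "\<dots> \<ge> 0" by (intro integral_nonneg_AE AE_I2 Im_phi_nonneg assms)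
  finally show ?thesis by simp
qed

lemma phi_iy_bound:
  assumes y: "y \<ge> 1"
  shows "norm (phi (\<i> * of_real y) t / (\<i> * of_real y)) \<le> 1 / (1 + t\<^sup>2)"
proof -
  define z where "z = \<i> * of_real y"
  have y0: "y > 0" using y by simp
  have nz: "of_real t - z \<noteq> 0" using y0 by (auto simp: z_def complex_eq_iff)
  have tp: "t\<^sup>2 + 1 > 0" by simp
  have nz2: "(complex_of_real t)\<^sup>2 + 1 \<noteq> 0"
    by (metis of_real_1 of_real_add of_real_eq_0_iff of_real_power sq1)
  have eq: "phi z t = (1 + of_real t * z) / ((of_real t - z) * of_real (t\<^sup>2 + 1))"
    using nz nz2 unfolding phi_def
    by (simp add: divide_simps) (simp add: algebra_simps power2_eq_square)
  have n1: "norm (1 + of_real t * z) \<le> y * norm (of_real t - z)"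
  proof (rule power2_le_imp_le)
    have "(norm (1 + of_real t * z))\<^sup>2 = 1 + t\<^sup>2 * y\<^sup>2" by (simp add: z_def cmod_power2 power_mult_distrib)
    also have "\<dots> \<le> y\<^sup>2 * (t\<^sup>2 + y\<^sup>2)"
    proof -
      have h: "1 \<le> y\<^sup>2" using y by (simp add: one_le_power)
      have "1 * 1 \<le> y\<^sup>2 * y\<^sup>2" by (rule mult_mono) (use h in auto)
      thus ?thesis by (simp add: algebra_simps)
    qed
    also have "\<dots> = (y * norm (of_real t - z))\<^sup>2" by (simp add: z_def cmod_power2 power_mult_distrib)
    finally show "(norm (1 + of_real t * z))\<^sup>2 \<le> (y * norm (of_real t - z))\<^sup>2" .
  qed (use y0 in simp)
  have "norm (phi z t / z) = norm ((1 + of_real t * z) / ((of_real t - z) * of_real (t\<^sup>2 + 1)) / z)"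
    by (simp only: eq)
  also have "\<dots> = norm (1 + of_real t * z) / (y * norm (of_real t - z) * (t\<^sup>2 + 1))"
    using y0 tp unfolding norm_divide norm_mult norm_of_real by (simp add: z_def norm_mult mult_ac)
  also have "\<dots> \<le> (y * norm (of_real t - z)) / (y * norm (of_real t - z) * (t\<^sup>2 + 1))"
    using n1 nz y0 tp by (intro divide_right_mono) auto
  also have "\<dots> = 1 / (1 + t\<^sup>2)"
  proof -
    have nn: "y * norm (of_real t - z) \<noteq> 0" using nz y0 by simp
    have "(y * norm (of_real t - z)) / (y * norm (of_real t - z) * (t\<^sup>2 + 1))
       = (y * norm (of_real t - z) * 1) / (y * norm (of_real t - z) * (t\<^sup>2 + 1))" by simp
    also have "\<dots> = 1 / (t\<^sup>2 + 1)" by (rule mult_divide_mult_cancel_left[OF nn])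
    finally show ?thesis by (simp add: add.commute)
  qed
  finally show ?thesis by (simp add: z_def)
qed

lemma phi_iy_lim: "((\<lambda>y. phi (\<i> * of_real y) t / (\<i> * of_real y)) \<longlongrightarrow> 0) at_top"
proof (rule Lim_null_comparison)
  show "eventually (\<lambda>y. norm (phi (\<i> * of_real y) t / (\<i> * of_real y)) \<le> 2 / y) at_top"
    using eventually_ge_at_top[of "1::real"]
  proof eventually_elim
    case (elim y)
    have y0: "y > 0" using elim by simp
    have "norm (phi (\<i> * of_real y) t) \<le> norm (1 / (of_real t - \<i> * of_real y)) + norm (of_real (t / (t\<^sup>2 + 1)) :: complex)"
      unfolding phi_def by (rule norm_triangle_ineq4)
    also have "norm (1 / (of_real t - \<i> * of_real y)) \<le> 1"
    proof -
      have "\<bar>Im (of_real t - \<i> * of_real y)\<bar> \<le> norm (of_real t - \<i> * of_real y)" by (rule abs_Im_le_cmod)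
      hence "1 \<le> norm (of_real t - \<i> * of_real y)" using elim by simp
      thus ?thesis by (simp add: norm_divide divide_le_eq)
    qed
    also have "norm (of_real (t / (t\<^sup>2 + 1)) :: complex) \<le> 1"
    proof -
      have "\<bar>t\<bar> \<le> t\<^sup>2 + 1"
      proof -
        have "0 \<le> (\<bar>t\<bar> - 1)\<^sup>2" by simp
        hence "2 * \<bar>t\<bar> \<le> \<bar>t\<bar>\<^sup>2 + 1" by (simp add: power2_eq_square algebra_simps)
        thus ?thesis by simp
      qed
      thus ?thesis unfolding norm_of_real by (simp add: abs_divide divide_le_eq)
    qed
    finally have "norm (phi (\<i> * of_real y) t) \<le> 2" by simp
    hence "norm (phi (\<i> * of_real y) t) / y \<le> 2 / y" using y0 by (intro divide_right_mono) auto
    thus ?case using y0 by (simp add: norm_divide norm_mult)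
  qed
  show "((\<lambda>y::real. 2 / y) \<longlongrightarrow> 0) at_top"
    by (intro tendsto_divide_0[OF tendsto_const] filterlim_at_top_imp_at_infinity filterlim_ident)
qed

lemma int_lim: "((\<lambda>y. (\<integral>t. phi (\<i> * of_real y) t \<partial>mu) / (\<i> * of_real y)) \<longlongrightarrow> 0) at_top"
proof -
  have "((\<lambda>y. \<integral>t. phi (\<i> * of_real y) t / (\<i> * of_real y) \<partial>mu) \<longlongrightarrow> (\<integral>t. 0 \<partial>mu)) at_top"
  proof (rule integral_dominated_convergence_at_top[where w = "\<lambda>t. 1 / (1 + t\<^sup>2)"])
    show "(\<lambda>t. 0::complex) \<in> borel_measurable mu" by simp
    show "(\<lambda>t. phi (\<i> * of_real y) t / (\<i> * of_real y)) \<in> borel_measurable mu" for y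
      by (simp add: measurable_cong_sets[OF sets_mu refl])
    show "integrable mu (\<lambda>t. 1 / (1 + t\<^sup>2))" by (rule w_GL)
    show "AE t in mu. ((\<lambda>y. phi (\<i> * of_real y) t / (\<i> * of_real y)) \<longlongrightarrow> 0) at_top"
      by (intro AE_I2 phi_iy_lim)
    show "\<forall>\<^sub>F y in at_top. AE t in mu. norm (phi (\<i> * of_real y) t / (\<i> * of_real y)) \<le> 1 / (1 + t\<^sup>2)"
      using eventually_ge_at_top[of "1::real"] by eventually_elim (intro AE_I2 phi_iy_bound)
  qed
  thus ?thesis by simp
qed

lemma T_real_1: "Im (T n 1) = 0"
proof (cases "r n = 0")
  case True thus ?thesis by (simp add: T_def)
next
  case False
  hence rn: "r n < 0" using r_nonpos[of n] by simp
  hence a0: "1 / r n < 0" by simp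
  have p1: "1 - 1 / r n > 0" using a0 by linarith
  have p2: "1 - 1 / r n + s > 0" using a0 s_pos by linarith
  have "T n 1 = Ln (of_real (1 - 1 / r n)) - Ln (of_real (1 - 1 / r n + s)) - of_real (s * r n)"
    using False by (simp add: T_def)
  also have "\<dots> = of_real (ln (1 - 1 / r n) - ln (1 - 1 / r n + s) - s * r n)"
    by (simp only: Ln_of_real[OF p1] Ln_of_real[OF p2]) simp
  finally show ?thesis by simp
qed

lemma S_real_1: "Im (\<Sum>n. T n 1) = 0"
proof -
  have "(1::complex) \<in> D" by (simp add: D_def)
  hence "summable (\<lambda>n. T n 1)" by (rule summable_norm_cancel[OF T_summable])
  thus ?thesis by (simp add: Im_suminf T_real_1)
qed

lemma connected_D: "connected D"
  unfolding D_def
proof (rule connected_Un)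
  show "connected {z. Im z > 0}" by (intro convex_connected convex_halfspace_Im_gt)
  show "connected {z. Re z > 0}" by (intro convex_connected convex_halfspace_Re_gt)
  have "1 + \<i> \<in> {z. Im z > 0} \<inter> {z. Re z > 0}" by simp
  thus "{z. Im z > 0} \<inter> {z. Re z > 0} \<noteq> {}" by blast
qed

end

lemma poly_deg1:
  fixes g :: "complex poly" and z :: complex
  assumes "degree g \<le> 1"
  shows "poly g z = coeff g 0 + coeff g 1 * z"
proof -
  have "poly g z = (\<Sum>i\<le>degree g. coeff g i * z ^ i)" by (rule poly_altdef)
  also have "\<dots> = (\<Sum>i\<le>1. coeff g i * z ^ i)"
    by (rule sum.mono_neutral_left) (use assms in \<open>auto simp: coeff_eq_0\<close>)
  finally show ?thesis by simp
qed

theorem proposition4p9: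
  fixes f :: "complex \<Rightarrow> complex" and L :: "complex \<Rightarrow> complex" and s :: real
  assumes entire: "f holomorphic_on UNIV"
    and real_fun: "\<forall>x::real. f (of_real x) \<in> \<real>"
    and genus: "has_genus f 1"
    and neg_zeros: "\<forall>z. f z = 0 \<longrightarrow> z \<in> \<real> \<and> Re z < 0"
    and f0: "f 0 \<in> \<real>" "Re (f 0) > 0"
    and L_holo: "L holomorphic_on cut_plane"
    and L_exp: "\<forall>z\<in>cut_plane. exp (L z) = f z"
    and L_real: "\<forall>x::real. x > 0 \<longrightarrow> L (of_real x) \<in> \<real>"
    and s_pos: "s > 0"
  shows "pick_function (\<lambda>z. L z - L (z + of_real s)) \<and>
         (\<exists>\<mu>. pick_representing_measure (\<lambda>z. L z - L (z + of_real s)) \<mu> \<and>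
              emeasure \<mu> {0<..} = 0) \<and>
         ((\<lambda>y::real. (L (\<i> * of_real y) - L (\<i> * of_real y + of_real s)) / (\<i> * of_real y))
            \<longlongrightarrow> 0) at_top"
proof -
  obtain m g w where deg: "degree g \<le> 1" and ws: "summable (\<lambda>n. norm (w n) ^ (1 + 1))"
    and fe: "\<forall>z. f z = z ^ m * exp (poly g z) * (\<Prod>n. weierstrass_factor 1 (z * w n))"
    using genus unfolding has_genus_def genus_le_def by blast
  have ws2: "summable (\<lambda>n. norm (w n) ^ 2)" using ws by (simp only: one_add_one)
  have m0: "m = 0"
  proof (rule ccontr)
    assume "m \<noteq> 0"
    hence "f 0 = 0" using fe by simp
    thus False using f0 by simp
  qed
  have fe': "f z = exp (poly g z) * (\<Prod>n. weierstrass_factor 1 (z * w n))" for z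
    using fe m0 by simp
  have wreal: "w n = of_real (Re (w n)) \<and> Re (w n) \<le> 0" for n
  proof (cases "w n = 0")
    case True thus ?thesis by simp
  next
    case False
    define z0 where "z0 = 1 / w n"
    have hp: "(\<lambda>k. weierstrass_factor 1 (z0 * w k)) has_prod (\<Prod>k. weierstrass_factor 1 (z0 * w k))"
      using E_conv_c[OF ws2, of z0] by (simp add: convergent_prod_has_prod_iff[symmetric])
    have "weierstrass_factor 1 (z0 * w n) = 0" using False by (simp add: z0_def wf1 wf1')
    hence "(\<Prod>k. weierstrass_factor 1 (z0 * w k)) = 0" by (rule has_prod_zeroI[OF hp])
    hence "f z0 = 0" by (simp add: fe')
    with neg_zeros have "z0 \<in> \<real>" "Re z0 < 0" by auto
    then obtain x where x: "z0 = of_real x" by (auto elim: Reals_cases)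
    with \<open>Re z0 < 0\<close> have x0: "x < 0" by simp
    have "w n = 1 / z0" by (simp add: z0_def)
    hence "w n = of_real (1 / x)" using x by simp
    thus ?thesis using x0 by simp
  qed
  define r where "r n = Re (w n)" for n
  have wr: "w = (\<lambda>n. of_real (r n))" using wreal by (auto simp: r_def fun_eq_iff)
  interpret pk r s
  proof
    show "r n \<le> 0" for n using wreal by (simp add: r_def)
    show "summable (\<lambda>n. r n ^ 2)" using ws2 by (simp add: wr)
    show "s > 0" by (rule s_pos)
  qed
  have fP: "f z = exp (poly g z) * (\<Prod>n. weierstrass_factor 1 (z * of_real (r n)))" for z
    using fe'[of z] by (simp add: wr)
  define b where "b = coeff g 1"
  have pg: "poly g z - poly g (z + of_real s) = - (b * of_real s)" for z
    using poly_deg1[OF deg] by (simp add: b_def algebra_simps)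
  have cutD: "z \<in> cut_plane" "z + of_real s \<in> cut_plane" if "z \<in> D" for z
  proof -
    have z: "Im z > 0 \<or> Re z > 0" using that by (simp add: D_def)
    show "z \<in> cut_plane" using z by (auto simp: cut_plane_def complex_eq_iff)
    show "z + of_real s \<in> cut_plane" using z s_pos by (auto simp: cut_plane_def complex_eq_iff)
  qed
  define q where "q z = L z - L (z + of_real s) - (\<Sum>n. T n z)" for z
  have expq: "exp (q z) = exp (- (b * of_real s))" if zD: "z \<in> D" for z
  proof -
    define P where "P = (\<Prod>n. weierstrass_factor 1 ((z + of_real s) * of_real (r n)))"
    have e1: "exp (L z) = exp (poly g z) * P * exp (\<Sum>n. T n z)"
      using L_exp cutD[OF zD] fP[of z] P_shift[OF zD] by (simp add: P_def mult_ac)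
    have e2: "exp (L (z + of_real s)) = exp (poly g (z + of_real s)) * P"
      using L_exp cutD[OF zD] fP[of "z + of_real s"] by (simp add: P_def)
    have P0: "P \<noteq> 0" using e2 by (metis exp_not_eq_zero mult_zero_right)
    have "exp (q z) = exp (L z) / exp (L (z + of_real s)) / exp (\<Sum>n. T n z)"
      by (simp add: q_def exp_diff)
    also have "\<dots> = exp (poly g z) / exp (poly g (z + of_real s))"
      using P0 by (simp add: e1 e2)
    also have "\<dots> = exp (- (b * of_real s))" by (simp flip: exp_diff add: pg)
    finally show ?thesis .
  qed
  have qcont: "continuous_on D q"
  proof -
    have cL: "continuous_on cut_plane L" by (rule holomorphic_on_imp_continuous_on[OF L_holo])
    have c1: "continuous_on D L" by (rule continuous_on_subset[OF cL]) (use cutD in blast)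
    have c2: "continuous_on D (\<lambda>z. L (z + of_real s))"
      by (rule continuous_on_compose2[OF cL]) (use cutD(2) in \<open>auto intro!: continuous_intros\<close>)
    show ?thesis unfolding q_def by (intro continuous_on_diff c1 c2 S_cont)
  qed
  have "q constant_on D"
  proof (rule continuous_discrete_range_constant[OF connected_D qcont])
    fix x assume xD: "x \<in> D"
    show "\<exists>e>0. \<forall>y. y \<in> D \<and> q y \<noteq> q x \<longrightarrow> e \<le> norm (q y - q x)"
    proof (intro exI[of _ "2 * pi"] conjI allI impI)
      show "2 * pi > 0" by simp
      fix y assume y: "y \<in> D \<and> q y \<noteq> q x"
      have "exp (q y) = exp (q x)" using expq xD y by simp
      then obtain k :: int where k: "q y = q x + of_real (real_of_int (2 * k) * pi) * \<i>"
        by (auto simp: exp_eq)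
      have "k \<noteq> 0" using k y by auto
      hence "1 \<le> \<bar>real_of_int k\<bar>" by linarith
      have "norm (q y - q x) = 2 * pi * \<bar>real_of_int k\<bar>" using k by (simp add: norm_mult abs_mult)
      also have "\<dots> \<ge> 2 * pi * 1" using \<open>1 \<le> \<bar>real_of_int k\<bar>\<close> by (intro mult_left_mono) auto
      finally show "2 * pi \<le> norm (q y - q x)" by simp
    qed
  qed
  then obtain \<kappa> where \<kappa>: "\<And>z. z \<in> D \<Longrightarrow> q z = \<kappa>" by (auto simp: constant_on_def)
  have oneD: "(1::complex) \<in> D" by (simp add: D_def)
  have Imk: "Im \<kappa> = 0"
  proof -
    have "L (of_real 1) \<in> \<real>" using L_real by (metis zero_less_one)
    hence a: "Im (L 1) = 0" by (simp add: complex_is_Real_iff)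
    have "L (of_real (1 + s)) \<in> \<real>" using L_real s_pos by (metis add_pos_pos zero_less_one)
    hence b: "Im (L (1 + of_real s)) = 0" by (simp add: complex_is_Real_iff)
    have "\<kappa> = q 1" using \<kappa>[OF oneD] by simp
    thus ?thesis using a b S_real_1 by (simp add: q_def)
  qed
  define \<beta> where "\<beta> = Re \<kappa> + (\<Sum>n. c n)"
  have repr: "L z - L (z + of_real s) = of_real \<beta> + (\<integral>t. phi z t \<partial>mu)" if z: "Im z > 0" for z
  proof -
    have zD: "z \<in> D" using z by (simp add: D_def)
    have "L z - L (z + of_real s) = \<kappa> + (\<Sum>n. T n z)" using \<kappa>[OF zD] unfolding q_def by (simp add: algebra_simps)
    also have "\<dots> = \<kappa> + (\<integral>t. phi z t \<partial>mu) + of_real (\<Sum>n. c n)" by (simp add: S_repr[OF z])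
    also have "\<kappa> = of_real (Re \<kappa>)" using Imk by (simp add: complex_eq_iff)
    finally show ?thesis by (simp add: \<beta>_def)
  qed
  have pick: "pick_function (\<lambda>z. L z - L (z + of_real s))"
    unfolding pick_function_def
  proof
    have "(\<lambda>z. L (z + of_real s)) holomorphic_on upper_half_plane"
    proof -
      have "(L \<circ> (\<lambda>z. z + of_real s)) holomorphic_on upper_half_plane"
        by (rule holomorphic_on_compose_gen[OF _ L_holo]) (auto intro!: holomorphic_intros cutD simp: upper_half_plane_def D_def)
      thus ?thesis by (simp add: o_def)
    qed
    moreover have "L holomorphic_on upper_half_plane"
      by (rule holomorphic_on_subset[OF L_holo]) (auto intro!: cutD simp: upper_half_plane_def D_def)
    ultimately show "(\<lambda>z. L z - L (z + of_real s)) holomorphic_on upper_half_plane"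
      by (intro holomorphic_on_diff)
    show "\<forall>z\<in>upper_half_plane. 0 \<le> Im (L z - L (z + of_real s))"
      using Im_int_nonneg by (auto simp: upper_half_plane_def repr)
  qed
  have meas: "pick_representing_measure (\<lambda>z. L z - L (z + of_real s)) mu"
    unfolding pick_representing_measure_def
  proof (intro conjI)
    show "sets mu = sets borel" by simp
    show "(\<integral>\<^sup>+ t. ennreal (1 / (1 + t\<^sup>2)) \<partial>mu) < \<infinity>" by (rule mu_finite)
    show "\<exists>\<alpha> \<beta>. 0 \<le> \<alpha> \<and> (\<forall>z\<in>upper_half_plane. L z - L (z + of_real s) = of_real \<alpha> * z + of_real \<beta> +
            (\<integral>t. (1 / (of_real t - z) - of_real (t / (t\<^sup>2 + 1))) \<partial>mu))"
      using repr by (intro exI[of _ "0::real"] exI[of _ \<beta>]) (auto simp: upper_half_plane_def phi_def)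
  qed
  have lim: "((\<lambda>y::real. (L (\<i> * of_real y) - L (\<i> * of_real y + of_real s)) / (\<i> * of_real y)) \<longlongrightarrow> 0) at_top"
  proof -
    have inf: "filterlim (\<lambda>y::real. \<i> * of_real y) at_infinity at_top"
      unfolding filterlim_at_infinity_conv_norm_at_top
      by (rule filterlim_cong[THEN iffD2, OF refl refl _ filterlim_ident])
         (auto intro: eventually_mono[OF eventually_gt_at_top[of "0::real"]] simp: norm_mult)
    have "((\<lambda>y::real. of_real \<beta> / (\<i> * of_real y) + (\<integral>t. phi (\<i> * of_real y) t \<partial>mu) / (\<i> * of_real y)) \<longlongrightarrow> 0 + 0) at_top"
      by (intro tendsto_add tendsto_divide_0[OF tendsto_const inf] int_lim)
    moreover have "eventually (\<lambda>y::real. of_real \<beta> / (\<i> * of_real y) + (\<integral>t. phi (\<i> * of_real y) t \<partial>mu) / (\<i> * of_real y)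
        = (L (\<i> * of_real y) - L (\<i> * of_real y + of_real s)) / (\<i> * of_real y)) at_top"
      using eventually_gt_at_top[of "0::real"]
      by eventually_elim (simp add: repr add_divide_distrib)
    ultimately show ?thesis by (simp add: tendsto_cong)
  qed
  show ?thesis using pick meas mu_zero lim by blast
qed

end
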